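(* Let $n\ge q\ge1$ and write $n=(2^q-1)v+w$ with $v=\lfloor n/(2^q-1)\rfloor$ and $w\in\{0,1,\dots,2^q-2\}$. For any blocked $2^n$ factorial in blocks of size $2^q$ whose generator matrix $X$ has all columns in $\mathcal{X}_q$ (so that all main effects are estimable), the number of estimable two-factor interactions is at most $$\phi_{\max}=\binom{n}{2}-vw-(2^q-1)\binom{v}{2}.$$
   Context: A blocked $2^n$ factorial in blocks of size $2^q$ is specified by a $q\times n$ generator matrix $X$ over $\mathrm{GF}(2)$ of rank $q$: the principal block is the row space of $X$ and the other blocks are its cosets in $\mathrm{GF}(2)^n$. An effect of a set $S$ of factors, with contrast $(-1)^{\sum_{j\in S}x_j}$, is estimable iff its contrast sums to zero over every block; equivalently the two-factor interaction $F_jF_k$ is estimable iff columns $j$ and $k$ of $X$ differ. $\mathcal{X}_q$ is the set of the $2^q-1$ nonzero $q\times1$ vectors over $\mathrm{GF}(2)$. *)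

theory Defs
  imports Main
begin

text \<open>A q x n matrix over GF(2) is represented as X :: nat \<Rightarrow> nat \<Rightarrow> bool,
  entry (i,j) = X i j (True = 1), only indices i < q, j < n being relevant.\<close>

text \<open>Rank q over GF(2): the q rows are linearly independent, i.e. no nonempty
  set of rows sums (mod 2) to the zero vector.\<close>
definition gf2_full_row_rank :: "nat \<Rightarrow> nat \<Rightarrow> (nat \<Rightarrow> nat \<Rightarrow> bool) \<Rightarrow> bool" where
  "gf2_full_row_rank q n X \<longleftrightarrow>
     (\<forall>S. S \<subseteq> {..<q} \<longrightarrow> S \<noteq> {} \<longrightarrow> (\<exists>j<n. odd (card {i\<in>S. X i j})))"

definition col_nonzero :: "nat \<Rightarrow> (nat \<Rightarrow> nat \<Rightarrow> bool) \<Rightarrow> nat \<Rightarrow> bool" where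
  "col_nonzero q X j \<longleftrightarrow> (\<exists>i<q. X i j)"

text \<open>Columns j and k differ (i.e. interaction F_j F_k is estimable).\<close>
definition cols_differ :: "nat \<Rightarrow> (nat \<Rightarrow> nat \<Rightarrow> bool) \<Rightarrow> nat \<Rightarrow> nat \<Rightarrow> bool" where
  "cols_differ q X j k \<longleftrightarrow> (\<exists>i<q. X i j \<noteq> X i k)"

definition num_est_2fi :: "nat \<Rightarrow> nat \<Rightarrow> (nat \<Rightarrow> nat \<Rightarrow> bool) \<Rightarrow> nat" where
  "num_est_2fi q n X = card {(j,k). j < k \<and> k < n \<and> cols_differ q X j k}"

end

theory Submission
  imports Defs
begin

definition prs :: "nat set \<Rightarrow> (nat \<times> nat) set" where
  "prs A = {(j,k). j \<in> A \<and> k \<in> A \<and> j < k}"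

lemma prs_card2:
  assumes "finite A"
  shows "2 * card (prs A) = card A * card A - card A"
proof -
  let ?D = "{p \<in> A \<times> A. fst p \<noteq> snd p}"
  let ?diag = "(\<lambda>x. (x,x)) ` A"
  have fin: "finite (A \<times> A)" using assms by simp
  have "?D = A \<times> A - ?diag" by auto
  moreover have "?diag \<subseteq> A \<times> A" by auto
  moreover have "card ?diag = card A" by (rule card_image) (auto simp: inj_on_def)
  moreover have "finite ?diag" using assms by simp
  ultimately have cD: "card ?D = card A * card A - card A"
    using fin by (simp add: card_Diff_subset card_cartesian_product)
  have split: "?D = prs A \<union> (\<lambda>(j,k). (k,j)) ` prs A"
    by (auto simp: prs_def image_iff)
  have disj: "prs A \<inter> (\<lambda>(j,k). (k,j)) ` prs A = {}" by (auto simp: prs_def)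
  have fp: "finite (prs A)"
    by (rule finite_subset[OF _ fin]) (auto simp: prs_def)
  have cs: "card ((\<lambda>(j,k). (k,j)) ` prs A) = card (prs A)"
    by (rule card_image) (auto simp: inj_on_def)
  have "card ?D = card (prs A) + card ((\<lambda>(j,k). (k,j)) ` prs A)"
    unfolding split using fp disj by (simp add: card_Un_disjoint)
  with cs cD show ?thesis by simp
qed

lemma tangent:
  fixes x v :: int
  shows "x * (x - 1) \<ge> v * (v - 1) + 2 * v * (x - v)"
proof -
  have "(x - v) * (x - v - 1) \<ge> 0"
    by (cases "x \<le> v") (auto intro: mult_nonpos_nonpos mult_nonneg_nonneg)
  then show ?thesis by (simp add: algebra_simps)
qed

lemma key:
  fixes f :: "nat \<Rightarrow> 'a"
  assumes finC: "finite C" and img: "\<forall>j<n. f j \<in> C" and mpos: "card C > 0"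
  defines "m \<equiv> card C"
  shows "2 * int (card {(j,k). j < k \<and> k < n \<and> f j = f k})
         \<ge> int m * int (n div m) * (int (n div m) - 1) + 2 * int (n div m) * int (n mod m)"
proof -
  define A where "A c = {j. j < n \<and> f j = c}" for c
  have finA: "finite (A c)" for c by (auto simp: A_def)
  have U1: "{..<n} = (\<Union>c\<in>C. A c)" using img by (auto simp: A_def)
  have "card {..<n} = (\<Sum>c\<in>C. card (A c))"
    unfolding U1 by (rule card_UN_disjoint) (auto simp: finC finA A_def)
  hence sumn: "(\<Sum>c\<in>C. int (card (A c))) = int n" by (simp flip: of_nat_sum)
  have U2: "{(j,k). j < k \<and> k < n \<and> f j = f k} = (\<Union>c\<in>C. prs (A c))"
    using img by (auto simp: A_def prs_def)
  have finP: "finite (prs (A c))" for c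
    by (rule finite_subset[of _ "A c \<times> A c"]) (auto simp: prs_def finA)
  have cardE: "card {(j,k). j < k \<and> k < n \<and> f j = f k} = (\<Sum>c\<in>C. card (prs (A c)))"
    unfolding U2 apply (rule card_UN_disjoint) apply (rule finC) apply (simp add: finP)
    by (auto simp: A_def prs_def)
  have e2: "2 * int (card (prs (A c))) = int (card (A c)) * (int (card (A c)) - 1)" for c
  proof -
    have "int (2 * card (prs (A c))) = int (card (A c) * card (A c) - card (A c))"
      using prs_card2[OF finA] by simp
    also have "\<dots> = int (card (A c)) * (int (card (A c)) - 1)"
      by (simp add: of_nat_diff algebra_simps)
    finally show ?thesis by simp
  qed
  define v where "v = int (n div m)"
  have "2 * int (card {(j,k). j < k \<and> k < n \<and> f j = f k})
        = (\<Sum>c\<in>C. int (card (A c)) * (int (card (A c)) - 1))"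
    unfolding cardE by (simp add: sum_distrib_left flip: e2)
  also have "\<dots> \<ge> (\<Sum>c\<in>C. v * (v - 1) + 2 * v * (int (card (A c)) - v))"
    by (rule sum_mono) (rule tangent)
  finally have ge: "2 * int (card {(j,k). j < k \<and> k < n \<and> f j = f k})
       \<ge> (\<Sum>c\<in>C. v * (v - 1) + 2 * v * (int (card (A c)) - v))" .
  have "(\<Sum>c\<in>C. v * (v - 1) + 2 * v * (int (card (A c)) - v))
      = int m * (v * (v - 1)) + 2 * v * (int n - int m * v)"
    by (simp add: sum.distrib sum_subtractf sum_distrib_left[symmetric] sumn m_def
                  right_diff_distrib)
  also have "int n - int m * v = int (n mod m)"
    unfolding v_def by (metis add_diff_cancel_left' div_mult_mod_eq mult.commute of_nat_add of_nat_mult)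
  finally show ?thesis using ge unfolding v_def by (simp add: algebra_simps)
qed

theorem theorem2:
  fixes n q :: nat and X :: "nat \<Rightarrow> nat \<Rightarrow> bool"
  assumes "1 \<le> q" and "q \<le> n"
    and "gf2_full_row_rank q n X"
    and "\<forall>j<n. col_nonzero q X j"
  shows "int (num_est_2fi q n X)
           \<le> int (n choose 2) - int ((n div (2^q - 1)) * (n mod (2^q - 1)))
              - int (2^q - 1) * int ((n div (2^q - 1)) choose 2)"
proof -
  define col where "col j = {i. i < q \<and> X i j}" for j
  define C where "C = Pow {..<q} - {{}}"
  have finC: "finite C" by (simp add: C_def)
  have cC: "card C = 2^q - 1" unfolding C_def
    by (simp add: card_Diff_singleton card_Pow)
  have "(2::nat) ^ q \<ge> 2 ^ 1" using assms(1) by (rule power_increasing) simp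
  hence mpos: "card C > 0" using cC by simp
  have img: "\<forall>j<n. col j \<in> C" using assms(4)
    by (auto simp: C_def col_def col_nonzero_def)
  have cd: "cols_differ q X j k \<longleftrightarrow> col j \<noteq> col k" for j k
    by (auto simp: cols_differ_def col_def)
  let ?T = "{(j,k). j < k \<and> k < n}"
  let ?E = "{(j,k). j < k \<and> k < n \<and> col j = col k}"
  have Tp: "?T = prs {..<n}" by (auto simp: prs_def)
  have finT: "finite ?T"
    by (rule finite_subset[of _ "{..<n} \<times> {..<n}"]) auto
  have "{(j,k). j < k \<and> k < n \<and> cols_differ q X j k} = ?T - ?E" by (auto simp: cd)
  hence num: "num_est_2fi q n X = card ?T - card ?E"
    unfolding num_est_2fi_def
    by (simp add: card_Diff_subset[OF finite_subset[OF _ finT]] subset_iff)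
  have sub: "card ?E \<le> card ?T" by (rule card_mono[OF finT]) auto
  have T2: "2 * int (card ?T) = int n * (int n - 1)"
  proof -
    have "int (2 * card ?T) = int (n * n - n)" unfolding Tp using prs_card2[of "{..<n}"] by simp
    thus ?thesis by (simp add: of_nat_diff algebra_simps)
  qed
  note K = key[OF finC img mpos]
  define m where "m = card C"
  define v where "v = n div m"
  have ch2: "2 * int (x choose 2) = int x * (int x - 1)" for x :: nat
  proof -
    have "even (x * (x - 1))" by (cases "even x") auto
    hence "2 * (x choose 2) = x * (x - 1)" by (simp add: choose_two)
    hence "int (2 * (x choose 2)) = int (x * (x - 1))" by simp
    thus ?thesis by (cases x) (auto simp: algebra_simps)
  qed
  have "2 * int (num_est_2fi q n X) = 2 * int (card ?T) - 2 * int (card ?E)"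
    using num sub by (simp add: of_nat_diff)
  also have "\<dots> \<le> int n * (int n - 1) - (int m * int v * (int v - 1) + 2 * int v * int (n mod m))"
    using T2 K unfolding m_def v_def by linarith
  finally have "2 * int (num_est_2fi q n X) \<le>
     2 * (int (n choose 2) - int (v * (n mod m)) - int m * int (v choose 2))"
    by (simp add: right_diff_distrib ch2 algebra_simps)
  thus ?thesis unfolding v_def m_def cC by simp
qed

end
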